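(* There is a randomized algorithm that, for any finite family $\mathcal{F}\subset\mathbb{R}^{n\times n}$, any $\epsilon,\delta\in(0,1)$, and any unknown $\mathbf{A}\in\mathbb{R}^{n\times n}$ accessible only via vector-matrix-vector queries $(\mathbf{x},\mathbf{y})\mapsto\mathbf{x}^\mathsf{T}\mathbf{A}\mathbf{y}$, issues $O(\log(|\mathcal{F}|/\delta)/\epsilon^2)$ such queries and, with probability greater than $1-\delta$, returns $\tilde{\mathbf{B}}\in\mathcal{F}$ satisfying $\|\mathbf{A}-\tilde{\mathbf{B}}\|_\mathsf{F}\le(1+\epsilon)\min_{\mathbf{B}\in\mathcal{F}}\|\mathbf{A}-\mathbf{B}\|_\mathsf{F}$.
   Context: In the vector-matrix-vector query model the algorithm knows $\mathcal{F}$ and may query the scalar $\mathbf{x}^\mathsf{T}\mathbf{A}\mathbf{y}$ for vectors $\mathbf{x},\mathbf{y}\in\mathbb{R}^n$ of its choice. *)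

theory Defs
  imports "HOL-Probability.Probability"
begin

text \<open>Real n x n matrices are modelled as functions nat => nat => real (only entries with
indices < n matter); vectors in R^n as nat => real (only entries < n matter).\<close>

type_synonym rvec = "nat \<Rightarrow> real"
type_synonym rmat = "nat \<Rightarrow> nat \<Rightarrow> real"

definition vmv :: "nat \<Rightarrow> rmat \<Rightarrow> rvec \<Rightarrow> rvec \<Rightarrow> real" where
  "vmv n A x y = (\<Sum>i<n. \<Sum>j<n. x i * A i j * y j)"

definition frob_dist :: "nat \<Rightarrow> rmat \<Rightarrow> rmat \<Rightarrow> real" where
  "frob_dist n A B = sqrt (\<Sum>i<n. \<Sum>j<n. (A i j - B i j)^2)"

text \<open>Adaptive query transcript: a strategy Q chooses the next query pair from the answers
obtained so far; run_queries n Q A k is the list of the first k answers.\<close>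
fun run_queries :: "nat \<Rightarrow> (real list \<Rightarrow> rvec \<times> rvec) \<Rightarrow> rmat \<Rightarrow> nat \<Rightarrow> real list" where
  "run_queries n Q A 0 = []"
| "run_queries n Q A (Suc k) =
     (let as = run_queries n Q A k in as @ [vmv n A (fst (Q as)) (snd (Q as))])"

end

theory Submission
  imports Defs
begin


definition sgnp :: "real pmf" where "sgnp = pmf_of_set {-1, 1}"

lemma set_sgnp: "set_pmf sgnp = {-1, 1}"
  unfolding sgnp_def by (subst set_pmf_of_set) auto

lemma E_sgnp: "measure_pmf.expectation sgnp (f::real\<Rightarrow>real) = (f (-1) + f 1) / 2"
  unfolding sgnp_def by (subst integral_pmf_of_set) auto

definition Vp :: "nat set \<Rightarrow> (nat \<Rightarrow> real) pmf" where "Vp A = Pi_pmf A 0 (\<lambda>_. sgnp)"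

lemma finite_Pi_pmf:
  assumes "finite A" "\<And>x. x \<in> A \<Longrightarrow> finite (set_pmf (p x))"
  shows "finite (set_pmf (Pi_pmf A d p))"
  using assms by (subst set_Pi_pmf) (auto intro!: finite_PiE_dflt)

lemma finite_Vp: "finite A \<Longrightarrow> finite (set_pmf (Vp A))"
  unfolding Vp_def by (rule finite_Pi_pmf) (auto simp: set_sgnp)

lemma E_pair:
  fixes h :: "_ \<Rightarrow> real"
  assumes "finite (set_pmf p)" "finite (set_pmf q)"
  shows "measure_pmf.expectation (pair_pmf p q) h =
     measure_pmf.expectation p (\<lambda>a. measure_pmf.expectation q (\<lambda>b. h (a,b)))"
proof -
  have "measure_pmf.expectation (pair_pmf p q) h = (\<Sum>x\<in>set_pmf p \<times> set_pmf q. h x * pmf (pair_pmf p q) x)"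
    using assms by (intro integral_measure_pmf_real) auto
  also have "\<dots> = (\<Sum>a\<in>set_pmf p. \<Sum>b\<in>set_pmf q. h (a,b) * (pmf p a * pmf q b))"
    by (subst sum.cartesian_product) (auto simp: pmf_pair case_prod_unfold intro!: sum.cong)
  also have "\<dots> = (\<Sum>a\<in>set_pmf p. (\<Sum>b\<in>set_pmf q. h (a,b) * pmf q b) * pmf p a)"
    by (simp add: sum_distrib_right sum_distrib_left mult_ac)
  also have "\<dots> = (\<Sum>a\<in>set_pmf p. measure_pmf.expectation q (\<lambda>b. h (a,b)) * pmf p a)"
    using assms by (intro sum.cong refl, subst integral_measure_pmf_real[where A="set_pmf q"]) auto
  also have "\<dots> = measure_pmf.expectation p (\<lambda>a. measure_pmf.expectation q (\<lambda>b. h (a,b)))"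
    using assms by (intro integral_measure_pmf_real[symmetric]) auto
  finally show ?thesis .
qed

lemma E_Pi_insert:
  fixes h :: "_ \<Rightarrow> real"
  assumes "finite A" "a \<notin> A" "finite (set_pmf (p a))" "finite (set_pmf (Pi_pmf A d p))"
  shows "measure_pmf.expectation (Pi_pmf (insert a A) d p) h =
    measure_pmf.expectation (p a) (\<lambda>y. measure_pmf.expectation (Pi_pmf A d p) (\<lambda>f. h (f(a:=y))))"
  using assms by (simp add: Pi_pmf_insert E_pair case_prod_unfold)

lemma E_add:
  fixes f g :: "_ \<Rightarrow> real"
  assumes "finite (set_pmf p)"
  shows "measure_pmf.expectation p (\<lambda>x. f x + g x) = measure_pmf.expectation p f + measure_pmf.expectation p g"
  using assms by (intro Bochner_Integration.integral_add integrable_measure_pmf_finite)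

lemma E_const: "measure_pmf.expectation p (\<lambda>x. c::real) = c"
  by simp

lemma E_cmult: "measure_pmf.expectation p (\<lambda>x. c * (f x::real)) = c * measure_pmf.expectation p f"
  by simp

lemma E_mono:
  fixes f g :: "_ \<Rightarrow> real"
  assumes "finite (set_pmf p)" "\<And>x. x \<in> set_pmf p \<Longrightarrow> f x \<le> g x"
  shows "measure_pmf.expectation p f \<le> measure_pmf.expectation p g"
  using assms by (intro integral_mono_AE integrable_measure_pmf_finite) (auto simp: AE_measure_pmf_iff)

lemma E_avg:
  fixes f g :: "_ \<Rightarrow> real"
  assumes "finite (set_pmf p)"
  shows "(measure_pmf.expectation p f + measure_pmf.expectation p g) / 2 = measure_pmf.expectation p (\<lambda>x. (f x + g x) / 2)"
proof -
  have "measure_pmf.expectation p (\<lambda>x. (f x + g x) / 2) = measure_pmf.expectation p (\<lambda>x. f x + g x) / 2"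
    by simp
  thus ?thesis using E_add[OF assms, of f g] by simp
qed

lemma GK:
  fixes u :: "nat \<Rightarrow> nat \<Rightarrow> real"
  assumes "finite A" "finite J"
  shows "measure_pmf.expectation (Vp A) (\<lambda>x. \<Sum>j\<in>J. (\<Sum>i\<in>A. x i * u i j)^2) = (\<Sum>i\<in>A. \<Sum>j\<in>J. (u i j)^2)
     \<and> measure_pmf.expectation (Vp A) (\<lambda>x. (\<Sum>j\<in>J. (\<Sum>i\<in>A. x i * u i j)^2)^2) \<le> 3 * (\<Sum>i\<in>A. \<Sum>j\<in>J. (u i j)^2)^2"
  using assms(1)
proof (induction A rule: finite_induct)
  case empty
  show ?case by (simp add: Vp_def)
next
  case (insert a A)
  define N where "N = (\<lambda>x::nat\<Rightarrow>real. \<Sum>j\<in>J. (\<Sum>i\<in>A. x i * u i j)^2)"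
  define D where "D = (\<lambda>x::nat\<Rightarrow>real. \<Sum>j\<in>J. (\<Sum>i\<in>A. x i * u i j) * u a j)"
  define U where "U = (\<Sum>j\<in>J. (u a j)^2)"
  define T where "T = (\<Sum>i\<in>A. \<Sum>j\<in>J. (u i j)^2)"
  have fin: "finite (set_pmf (Vp A))" using insert by (simp add: finite_Vp)
  have key: "(\<Sum>j\<in>J. (\<Sum>i\<in>insert a A. (x(a:=y)) i * u i j)^2) = N x + 2*y*D x + U"
    if "y = 1 \<or> y = -1" for x y
  proof -
    have "(\<Sum>i\<in>insert a A. (x(a:=y)) i * u i j) = y * u a j + (\<Sum>i\<in>A. x i * u i j)" for j
    proof -
      have "(\<Sum>i\<in>A. (x(a:=y)) i * u i j) = (\<Sum>i\<in>A. x i * u i j)"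
        using insert.hyps by (intro sum.cong) auto
      thus ?thesis using insert.hyps by simp
    qed
    hence "(\<Sum>j\<in>J. (\<Sum>i\<in>insert a A. (x(a:=y)) i * u i j)^2)
        = (\<Sum>j\<in>J. y^2 * (u a j)^2 + 2 * y * ((\<Sum>i\<in>A. x i * u i j) * u a j) + (\<Sum>i\<in>A. x i * u i j)^2)"
      by (simp add: power2_eq_square algebra_simps)
    also have "\<dots> = N x + 2*y*D x + U"
      using that by (auto simp: N_def D_def U_def sum.distrib sum_distrib_left)
    finally show ?thesis .
  qed
  have IH1: "measure_pmf.expectation (Vp A) N = T" and IH2: "measure_pmf.expectation (Vp A) (\<lambda>x. (N x)^2) \<le> 3 * T^2"
    using insert.IH by (simp_all add: N_def T_def)
  have CS: "(D x)^2 \<le> N x * U" for x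
    unfolding D_def N_def U_def by (rule Cauchy_Schwarz_ineq_sum)
  have Nnn: "N x \<ge> 0" for x unfolding N_def by (intro sum_nonneg) auto
  have Unn: "U \<ge> 0" unfolding U_def by (intro sum_nonneg) auto
  have Tnn: "T \<ge> 0" unfolding T_def by (intro sum_nonneg) auto
  have split: "measure_pmf.expectation (Vp (insert a A)) (\<lambda>x. h (\<Sum>j\<in>J. (\<Sum>i\<in>insert a A. x i * u i j)^2))
     = (measure_pmf.expectation (Vp A) (\<lambda>x. h (N x - 2 * D x + U)) + measure_pmf.expectation (Vp A) (\<lambda>x. h (N x + 2 * D x + U))) / 2" for h :: "real \<Rightarrow> real"
  proof -
    have e1: "(\<lambda>f. h (\<Sum>j\<in>J. (\<Sum>i\<in>insert a A. (f(a:=y)) i * u i j)^2)) = (\<lambda>x. h (N x + 2 * y * D x + U))"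
      if "y = 1 \<or> y = -1" for y
      by (rule ext, subst key[OF that]) simp
    have "measure_pmf.expectation (Vp (insert a A)) (\<lambda>x. h (\<Sum>j\<in>J. (\<Sum>i\<in>insert a A. x i * u i j)^2))
       = measure_pmf.expectation sgnp (\<lambda>y. measure_pmf.expectation (Vp A) (\<lambda>f. h (\<Sum>j\<in>J. (\<Sum>i\<in>insert a A. (f(a:=y)) i * u i j)^2)))"
      unfolding Vp_def by (rule E_Pi_insert) (use insert.hyps fin in \<open>auto simp: Vp_def set_sgnp\<close>)
    also have "\<dots> = (measure_pmf.expectation (Vp A) (\<lambda>f. h (\<Sum>j\<in>J. (\<Sum>i\<in>insert a A. (f(a:=-1)) i * u i j)^2))
        + measure_pmf.expectation (Vp A) (\<lambda>f. h (\<Sum>j\<in>J. (\<Sum>i\<in>insert a A. (f(a:=1)) i * u i j)^2))) / 2"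
      by (rule E_sgnp)
    also have "\<dots> = (measure_pmf.expectation (Vp A) (\<lambda>x. h (N x + 2 * (-1) * D x + U)) + measure_pmf.expectation (Vp A) (\<lambda>x. h (N x + 2 * 1 * D x + U))) / 2"
      by (subst e1, simp, subst e1, simp, rule refl)
    finally show ?thesis by simp
  qed
  have "measure_pmf.expectation (Vp (insert a A)) (\<lambda>x. (\<Sum>j\<in>J. (\<Sum>i\<in>insert a A. x i * u i j)^2))
     = measure_pmf.expectation (Vp A) (\<lambda>x. ((N x - 2 * D x + U) + (N x + 2 * D x + U))/2)"
    by (subst split) (rule E_avg[OF fin])
  also have "\<dots> = measure_pmf.expectation (Vp A) (\<lambda>x. N x + U)"
    by (intro Bochner_Integration.integral_cong refl) (simp add: field_simps)
  also have "\<dots> = T + U" using fin IH1 by (simp add: E_add)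
  finally have R1: "measure_pmf.expectation (Vp (insert a A)) (\<lambda>x. (\<Sum>j\<in>J. (\<Sum>i\<in>insert a A. x i * u i j)^2)) = T + U" .
  have "measure_pmf.expectation (Vp (insert a A)) (\<lambda>x. (\<Sum>j\<in>J. (\<Sum>i\<in>insert a A. x i * u i j)^2)^2)
     = measure_pmf.expectation (Vp A) (\<lambda>x. ((N x - 2 * D x + U)^2 + (N x + 2 * D x + U)^2)/2)"
    by (subst split) (rule E_avg[OF fin])
  also have "\<dots> \<le> measure_pmf.expectation (Vp A) (\<lambda>x. (N x)^2 + 6 * U * N x + U^2)"
  proof (rule E_mono[OF fin])
    fix x
    have "((N x - 2 * D x + U)^2 + (N x + 2 * D x + U)^2)/2 = (N x + U)^2 + 4 * (D x)^2"
      by (simp add: power2_eq_square algebra_simps)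
    also have "\<dots> \<le> (N x + U)^2 + 4 * (N x * U)" using CS[of x] by simp
    also have "\<dots> = (N x)^2 + 6 * U * N x + U^2" by (simp add: power2_eq_square algebra_simps)
    finally show "((N x - 2 * D x + U)^2 + (N x + 2 * D x + U)^2)/2 \<le> (N x)^2 + 6 * U * N x + U^2" .
  qed
  also have "\<dots> = measure_pmf.expectation (Vp A) (\<lambda>x. (N x)^2) + 6 * U * T + U^2"
    using fin IH1 by (simp add: E_add)
  also have "\<dots> \<le> 3 * T^2 + 6 * U * T + U^2" using IH2 by simp
  also have "\<dots> \<le> 3 * (T + U)^2" using Unn Tnn by (simp add: power2_eq_square algebra_simps)
  finally have R2: "measure_pmf.expectation (Vp (insert a A)) (\<lambda>x. (\<Sum>j\<in>J. (\<Sum>i\<in>insert a A. x i * u i j)^2)^2) \<le> 3 * (T + U)^2" .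
  have TU: "(\<Sum>i\<in>insert a A. \<Sum>j\<in>J. (u i j)^2) = T + U"
    using insert.hyps by (simp add: T_def U_def)
  show ?case using R1 R2 unfolding TU by simp
qed


definition R :: "nat \<Rightarrow> ((nat \<Rightarrow> real) \<times> (nat \<Rightarrow> real)) pmf" where
  "R n = pair_pmf (Vp {..<n}) (Vp {..<n})"

definition fro :: "nat \<Rightarrow> rmat \<Rightarrow> real" where
  "fro n M = (\<Sum>i<n. \<Sum>j<n. (M i j)^2)"

lemma finite_R: "finite (set_pmf (R n))"
  unfolding R_def by (simp add: finite_Vp)

lemma vmv_alt: "vmv n M x y = (\<Sum>j<n. y j * (\<Sum>i<n. x i * M i j))"
  unfolding vmv_def by (subst sum.swap) (simp add: sum_distrib_left mult_ac)

lemma BL: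
  "measure_pmf.expectation (R n) (\<lambda>w. (vmv n M (fst w) (snd w))^2) = fro n M \<and>
   measure_pmf.expectation (R n) (\<lambda>w. ((vmv n M (fst w) (snd w))^2)^2) \<le> 9 * (fro n M)^2"
proof -
  define c where "c = (\<lambda>x j. \<Sum>i<n. x i * M i j)"
  define N where "N = (\<lambda>x. \<Sum>j<n. (c x j)^2)"
  have fin: "finite (set_pmf (Vp {..<n}))" by (simp add: finite_Vp)
  have inner: "measure_pmf.expectation (Vp {..<n}) (\<lambda>y. (vmv n M x y)^2) = N x \<and>
     measure_pmf.expectation (Vp {..<n}) (\<lambda>y. ((vmv n M x y)^2)^2) \<le> 3 * (N x)^2" for x
    using GK[of "{..<n}" "{0}" "\<lambda>j _. c x j"] by (simp add: vmv_alt N_def c_def mult_ac)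
  have outer: "measure_pmf.expectation (Vp {..<n}) N = fro n M \<and>
     measure_pmf.expectation (Vp {..<n}) (\<lambda>x. (N x)^2) \<le> 3 * (fro n M)^2"
    using GK[of "{..<n}" "{..<n}" M] by (simp add: N_def c_def fro_def)
  have "measure_pmf.expectation (R n) (\<lambda>w. (vmv n M (fst w) (snd w))^2)
     = measure_pmf.expectation (Vp {..<n}) (\<lambda>x. measure_pmf.expectation (Vp {..<n}) (\<lambda>y. (vmv n M x y)^2))"
    unfolding R_def by (subst E_pair) (simp_all add: fin)
  also have "\<dots> = fro n M" using inner outer by simp
  finally have 1: "measure_pmf.expectation (R n) (\<lambda>w. (vmv n M (fst w) (snd w))^2) = fro n M" .
  have "measure_pmf.expectation (R n) (\<lambda>w. ((vmv n M (fst w) (snd w))^2)^2)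
     = measure_pmf.expectation (Vp {..<n}) (\<lambda>x. measure_pmf.expectation (Vp {..<n}) (\<lambda>y. ((vmv n M x y)^2)^2))"
    unfolding R_def by (subst E_pair) (simp_all add: fin)
  also have "\<dots> \<le> measure_pmf.expectation (Vp {..<n}) (\<lambda>x. 3 * (N x)^2)"
    using inner by (intro E_mono fin) auto
  also have "\<dots> \<le> 9 * (fro n M)^2" using outer by simp
  finally show ?thesis using 1 by simp
qed


lemma E_component:
  fixes g :: "_ \<Rightarrow> real"
  assumes "finite A" "s \<in> A"
  shows "measure_pmf.expectation (Pi_pmf A d (\<lambda>_. p)) (\<lambda>W. g (W s)) = measure_pmf.expectation p g"
proof -
  have "measure_pmf.expectation (Pi_pmf A d (\<lambda>_. p)) (\<lambda>W. g (W s)) =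
        measure_pmf.expectation (map_pmf (\<lambda>W. W s) (Pi_pmf A d (\<lambda>_. p))) g" by simp
  also have "\<dots> = measure_pmf.expectation p g" using assms by (simp add: Pi_pmf_component)
  finally show ?thesis .
qed

lemma VS:
  fixes g :: "_ \<Rightarrow> real"
  assumes "finite A" "finite (set_pmf p)" "measure_pmf.expectation p g = 0"
  shows "measure_pmf.expectation (Pi_pmf A d (\<lambda>_. p)) (\<lambda>W. (\<Sum>s\<in>A. g (W s))^2)
           = card A * measure_pmf.expectation p (\<lambda>w. (g w)^2)"
  using assms(1)
proof (induction A rule: finite_induct)
  case empty
  show ?case by simp
next
  case (insert a A)
  define c where "c = measure_pmf.expectation p (\<lambda>w. (g w)^2)"
  define S where "S = (\<lambda>f. \<Sum>s\<in>A. g (f s))"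
  have fin: "finite (set_pmf (Pi_pmf A d (\<lambda>_. p)))"
    using insert.hyps assms by (intro finite_Pi_pmf) auto
  have sum: "(\<Sum>s\<in>insert a A. g ((f(a:=y)) s)) = g y + S f" for f y
  proof -
    have "(\<Sum>s\<in>A. g ((f(a:=y)) s)) = S f" unfolding S_def
      using insert.hyps by (intro sum.cong) auto
    thus ?thesis using insert.hyps by simp
  qed
  have ES: "measure_pmf.expectation (Pi_pmf A d (\<lambda>_. p)) S = 0"
  proof -
    have "measure_pmf.expectation (Pi_pmf A d (\<lambda>_. p)) S = (\<Sum>s\<in>A. measure_pmf.expectation (Pi_pmf A d (\<lambda>_. p)) (\<lambda>f. g (f s)))"
      unfolding S_def using fin by (intro Bochner_Integration.integral_sum integrable_measure_pmf_finite)
    also have "\<dots> = 0" using insert.hyps assms(3) by (simp add: E_component)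
    finally show ?thesis .
  qed
  have IH: "measure_pmf.expectation (Pi_pmf A d (\<lambda>_. p)) (\<lambda>f. (S f)^2) = card A * c"
    using insert.IH by (simp add: S_def c_def)
  have inner: "measure_pmf.expectation (Pi_pmf A d (\<lambda>_. p)) (\<lambda>f. (g y + S f)^2) = (g y)^2 + card A * c" for y
  proof -
    have "measure_pmf.expectation (Pi_pmf A d (\<lambda>_. p)) (\<lambda>f. (g y + S f)^2)
       = measure_pmf.expectation (Pi_pmf A d (\<lambda>_. p)) (\<lambda>f. ((g y)^2 + (2 * g y) * S f) + (S f)^2)"
      by (simp add: power2_eq_square algebra_simps)
    also have "\<dots> = (g y)^2 + (2 * g y) * measure_pmf.expectation (Pi_pmf A d (\<lambda>_. p)) S + card A * c"
      using fin IH by (simp only: E_add E_cmult E_const)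
    finally show ?thesis using ES by simp
  qed
  have "measure_pmf.expectation (Pi_pmf (insert a A) d (\<lambda>_. p)) (\<lambda>W. (\<Sum>s\<in>insert a A. g (W s))^2)
     = measure_pmf.expectation p (\<lambda>y. measure_pmf.expectation (Pi_pmf A d (\<lambda>_. p)) (\<lambda>f. (\<Sum>s\<in>insert a A. g ((f(a:=y)) s))^2))"
    by (rule E_Pi_insert) (use insert.hyps fin assms in auto)
  also have "\<dots> = measure_pmf.expectation p (\<lambda>y. (g y)^2 + card A * c)"
    by (simp only: sum inner)
  also have "\<dots> = c + card A * c" using assms(2) by (simp only: E_add E_const c_def)
  finally show ?case using insert.hyps by (simp add: c_def algebra_simps)
qed


definition Gp :: "nat \<Rightarrow> nat \<Rightarrow> (nat \<Rightarrow> (nat \<Rightarrow> real) \<times> (nat \<Rightarrow> real)) pmf" where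
  "Gp n m = Pi_pmf {..<m} (\<lambda>_. 0, \<lambda>_. 0) (\<lambda>_. R n)"

definition hs :: "nat \<Rightarrow> rmat \<Rightarrow> nat \<Rightarrow> (nat \<Rightarrow> (nat \<Rightarrow> real) \<times> (nat \<Rightarrow> real)) \<Rightarrow> real" where
  "hs n M m W = (\<Sum>s<m. (vmv n M (fst (W s)) (snd (W s)))^2)"

lemma finite_Gp: "finite (set_pmf (Gp n m))"
  unfolding Gp_def by (intro finite_Pi_pmf) (auto simp: finite_R)

lemma fro_nonneg: "fro n M \<ge> 0"
  unfolding fro_def by (intro sum_nonneg) auto

lemma fro_zero: "fro n M = 0 \<Longrightarrow> vmv n M x y = 0"
proof -
  assume "fro n M = 0"
  hence "\<forall>i<n. \<forall>j<n. M i j = 0" unfolding fro_def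
    by (subst (asm) sum_nonneg_eq_0_iff; auto intro!: sum_nonneg simp: sum_nonneg_eq_0_iff)
  thus ?thesis unfolding vmv_def by simp
qed

lemma group_bad:
  assumes "m > 0" "\<eta> > 0" "32 \<le> real m * \<eta>^2"
  shows "measure_pmf.prob (Gp n m) {W. \<bar>hs n M m W - m * fro n M\<bar> > m * \<eta> * fro n M} \<le> 1/4"
proof (cases "fro n M = 0")
  case True
  hence "{W. \<bar>hs n M m W - m * fro n M\<bar> > m * \<eta> * fro n M} = {}"
    by (simp add: hs_def fro_zero)
  thus ?thesis by simp
next
  case False
  define \<mu> where "\<mu> = fro n M"
  have \<mu>: "\<mu> > 0" using False fro_nonneg[of n M] by (simp add: \<mu>_def)
  define h where "h = (\<lambda>w. (vmv n M (fst w) (snd w))^2)"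
  define g where "g = (\<lambda>w. h w + (- \<mu>))"
  have Eh: "measure_pmf.expectation (R n) h = \<mu>" and Eh2: "measure_pmf.expectation (R n) (\<lambda>w. (h w)^2) \<le> 9 * \<mu>^2"
    using BL[of n M] by (simp_all add: h_def \<mu>_def)
  have Eg: "measure_pmf.expectation (R n) g = 0"
    unfolding g_def using finite_R[of n] Eh by (simp only: E_add E_const)
  have "measure_pmf.expectation (R n) (\<lambda>w. (g w)^2) = measure_pmf.expectation (R n) (\<lambda>w. (h w)^2 + (-2 * \<mu>) * h w + \<mu>^2)"
    unfolding g_def by (simp add: power2_eq_square algebra_simps)
  also have "\<dots> = measure_pmf.expectation (R n) (\<lambda>w. (h w)^2) + (-2 * \<mu>) * \<mu> + \<mu>^2"
    using finite_R[of n] Eh by (simp only: E_add E_const E_cmult)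
  also have "\<dots> \<le> 8 * \<mu>^2" using Eh2 by (simp add: power2_eq_square)
  finally have Eg2: "measure_pmf.expectation (R n) (\<lambda>w. (g w)^2) \<le> 8 * \<mu>^2" .
  have V: "measure_pmf.expectation (Gp n m) (\<lambda>W. (\<Sum>s<m. g (W s))^2) \<le> m * (8 * \<mu>^2)"
    unfolding Gp_def using VS[of "{..<m}" "R n" g] finite_R[of n] Eg Eg2
    by (simp add: mult_left_mono)
  have sumg: "(\<Sum>s<m. g (W s)) = hs n M m W - m * \<mu>" for W
    by (simp add: g_def hs_def h_def sum.distrib sum_subtractf)
  define c where "c = (m * \<eta> * \<mu>)^2"
  have c: "c > 0" using assms \<mu> by (simp add: c_def)
  have "{W. \<bar>hs n M m W - m * fro n M\<bar> > m * \<eta> * fro n M} \<subseteq> {W \<in> space (measure_pmf (Gp n m)). (\<Sum>s<m. g (W s))^2 \<ge> c}"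
  proof safe
    fix W assume "\<bar>hs n M m W - m * fro n M\<bar> > m * \<eta> * fro n M"
    hence "\<bar>\<Sum>s<m. g (W s)\<bar> \<ge> m * \<eta> * \<mu>" by (simp add: sumg \<mu>_def)
    moreover have "m * \<eta> * \<mu> \<ge> 0" using assms \<mu> by simp
    ultimately show "(\<Sum>s<m. g (W s))^2 \<ge> c" unfolding c_def
      by (metis abs_le_square_iff abs_of_nonneg)
  qed simp
  hence "measure_pmf.prob (Gp n m) {W. \<bar>hs n M m W - m * fro n M\<bar> > m * \<eta> * fro n M}
      \<le> measure_pmf.prob (Gp n m) {W \<in> space (measure_pmf (Gp n m)). (\<Sum>s<m. g (W s))^2 \<ge> c}"
    by (intro measure_pmf.finite_measure_mono) auto
  also have "\<dots> \<le> measure_pmf.expectation (Gp n m) (\<lambda>W. (\<Sum>s<m. g (W s))^2) / c"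
    by (rule integral_Markov_inequality_measure[where A = UNIV])
       (use c finite_Gp in \<open>auto intro: integrable_measure_pmf_finite\<close>)
  also have "\<dots> \<le> m * (8 * \<mu>^2) / c"
    using V c by (simp add: divide_right_mono)
  also have "\<dots> = 8 / (m * \<eta>^2)"
    using assms \<mu> by (simp add: c_def power2_eq_square field_simps)
  also have "\<dots> \<le> 1/4"
    using assms by (simp add: field_simps)
  finally show ?thesis .
qed


lemma median_fail:
  fixes P :: "'a pmf" and bad :: "'a \<Rightarrow> bool"
  assumes G: "G > 0" and pb: "measure_pmf.prob P {w. bad w} \<le> 1/4"
  shows "measure_pmf.prob (Pi_pmf {..<G} d (\<lambda>_. P))
           {\<Omega>. real G \<le> 2 * real (card {g\<in>{..<G}. bad (\<Omega> g)})} \<le> exp (- (real G / 8))"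
proof -
  define PP where "PP = Pi_pmf {..<G} d (\<lambda>_. P)"
  define X where "X = (\<lambda>g (\<Omega>::nat\<Rightarrow>'a). if bad (\<Omega> g) then 1 else (0::real))"
  have indep: "prob_space.indep_vars (measure_pmf PP) (\<lambda>_. borel) X {..<G}"
    unfolding X_def PP_def
    by (rule prob_space.indep_vars_compose2[OF measure_pmf.prob_space_axioms indep_vars_Pi_pmf[of "{..<G}" d "\<lambda>_. P"],
          where Y = "\<lambda>_ x. if bad x then 1 else (0::real)"]) auto
  interpret H: Hoeffding_ineq "measure_pmf PP" "{..<G}" X "\<lambda>_. 0" "\<lambda>_. 1" "\<Sum>i\<in>{..<G}. measure_pmf.expectation PP (X i)"
  proof unfold_locales
    show "prob_space.indep_vars (measure_pmf PP) (\<lambda>_. borel) X {..<G}" by (rule indep)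
    show "AE x in measure_pmf PP. X i x \<in> {0..1}" for i
      by (intro AE_pmfI) (simp add: X_def)
  qed simp
  have EX: "measure_pmf.expectation PP (X g) \<le> 1/4" if "g < G" for g
  proof -
    have "measure_pmf.expectation PP (X g) = measure_pmf.expectation P (\<lambda>w. if bad w then 1 else 0)"
      unfolding PP_def X_def using that by (subst E_component) auto
    also have "\<dots> = measure_pmf.prob P {w. bad w}"
    proof -
      have "(\<lambda>w. if bad w then 1 else 0::real) = indicator {w. bad w}" by (auto simp: indicator_def)
      thus ?thesis by simp
    qed
    finally show ?thesis using pb by simp
  qed
  have mu: "(\<Sum>i\<in>{..<G}. measure_pmf.expectation PP (X i)) \<le> real G / 4"
    using sum_mono[of "{..<G}" "\<lambda>i. measure_pmf.expectation PP (X i)" "\<lambda>_. 1/4"] EX by simp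
  have sumX: "(\<Sum>i\<in>{..<G}. X i \<Omega>) = real (card {g\<in>{..<G}. bad (\<Omega> g)})" for \<Omega>
  proof -
    have "{..<G} \<inter> {i. bad (\<Omega> i)} = {g\<in>{..<G}. bad (\<Omega> g)}" by auto
    thus ?thesis unfolding X_def by (simp add: sum.If_cases)
  qed
  have "{\<Omega>. real G \<le> 2 * real (card {g\<in>{..<G}. bad (\<Omega> g)})} \<subseteq>
        {x \<in> space (measure_pmf PP). (\<Sum>i\<in>{..<G}. X i x) \<ge> (\<Sum>i\<in>{..<G}. measure_pmf.expectation PP (X i)) + real G / 4}"
    using mu by (auto simp: sumX)
  hence "measure_pmf.prob PP {\<Omega>. real G \<le> 2 * real (card {g\<in>{..<G}. bad (\<Omega> g)})} \<le>
         measure_pmf.prob PP {x \<in> space (measure_pmf PP). (\<Sum>i\<in>{..<G}. X i x) \<ge> (\<Sum>i\<in>{..<G}. measure_pmf.expectation PP (X i)) + real G / 4}"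
    by (intro measure_pmf.finite_measure_mono) auto
  also have "\<dots> \<le> exp (-2 * (real G / 4)^2 / (\<Sum>i\<in>{..<G}. ((\<lambda>_. 1::real) i - (\<lambda>_. 0) i)^2))"
    by (rule H.Hoeffding_ineq_ge) (use G in auto)
  also have "\<dots> = exp (- (real G / 8))"
    using G by (simp add: power2_eq_square field_simps)
  finally show ?thesis unfolding PP_def .
qed



definition med :: "(nat \<Rightarrow> real) \<Rightarrow> nat \<Rightarrow> real" where
  "med f G = Min (f ` {h. h < G \<and> G < 2 * card {g. g < G \<and> f g \<le> f h}})"

lemma med_bounds:
  assumes "2 * card {g. g < G \<and> \<not> (lo \<le> f g \<and> f g \<le> hi)} < G"
  shows "lo \<le> med f G \<and> med f G \<le> hi"
proof -
  define Good where "Good = {g. g < G \<and> lo \<le> f g \<and> f g \<le> hi}"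
  define Bad where "Bad = {g. g < G \<and> \<not> (lo \<le> f g \<and> f g \<le> hi)}"
  define S where "S = {h. h < G \<and> G < 2 * card {g. g < G \<and> f g \<le> f h}}"
  have part: "card Good + card Bad = G"
  proof -
    have "{..<G} = Good \<union> Bad" "Good \<inter> Bad = {}" by (auto simp: Good_def Bad_def)
    hence "card {..<G} = card Good + card Bad"
      by (metis card_Un_disjoint finite_Un finite_lessThan)
    thus ?thesis by simp
  qed
  have badc: "2 * card Bad < G" using assms by (simp add: Bad_def)
  hence gc: "G < 2 * card Good" using part by linarith
  hence "Good \<noteq> {}" by auto
  have finG: "finite Good" by (simp add: Good_def)
  have "Max (f ` Good) \<in> f ` Good" using finG \<open>Good \<noteq> {}\<close> by (intro Max_in) auto
  then obtain h where h: "h \<in> Good" "Max (f ` Good) = f h" by auto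
  have "Good \<subseteq> {g. g < G \<and> f g \<le> f h}"
    using h finG by (auto simp: Good_def intro!: Max_ge[of "f ` Good", simplified h(2)])
  hence "card Good \<le> card {g. g < G \<and> f g \<le> f h}" by (intro card_mono) auto
  hence hS: "h \<in> S" using gc h(1) by (auto simp: S_def Good_def)
  have finS: "finite S" by (simp add: S_def)
  have "med f G \<le> f h" unfolding med_def S_def[symmetric] using hS finS by (intro Min_le) auto
  also have "f h \<le> hi" using h(1) by (simp add: Good_def)
  finally have up: "med f G \<le> hi" .
  have "med f G \<in> f ` S" unfolding med_def S_def[symmetric] using hS finS by (intro Min_in) auto
  then obtain h' where h': "h' \<in> S" "med f G = f h'" by auto
  have "lo \<le> f h'"
  proof (rule ccontr)
    assume "\<not> lo \<le> f h'"
    hence "{g. g < G \<and> f g \<le> f h'} \<subseteq> Bad" by (auto simp: Bad_def)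
    hence "card {g. g < G \<and> f g \<le> f h'} \<le> card Bad" by (intro card_mono) (auto simp: Bad_def)
    thus False using h'(1) badc by (auto simp: S_def)
  qed
  thus ?thesis using up h' by simp
qed

lemma run_queries_nonadaptive:
  assumes "\<And>as. Q as = Qt (length as)"
  shows "run_queries n Q A k = map (\<lambda>t. vmv n A (fst (Qt t)) (snd (Qt t))) [0..<k]"
  by (induction k) (simp_all add: assms Let_def)


lemma vmv_diff: "vmv n A x y - vmv n B x y = vmv n (\<lambda>i j. A i j - B i j) x y"
  unfolding vmv_def by (simp add: sum_subtractf[symmetric] algebra_simps)

lemma idx_facts:
  fixes s m g G :: nat
  assumes "s < m" "g < G"
  shows "g * m + s < G * m" "(g * m + s) div m = g" "(g * m + s) mod m = s"
proof -
  have "g * m + s < g * m + m" using assms(1) by linarith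
  also have "\<dots> = (g + 1) * m" by simp
  also have "\<dots> \<le> G * m" using assms by (intro mult_right_mono) auto
  finally show "g * m + s < G * m" .
  show "(g * m + s) div m = g" using assms by simp
  show "(g * m + s) mod m = s" using assms by simp
qed

lemma frob_fro: "frob_dist n A B = sqrt (fro n (\<lambda>i j. A i j - B i j))"
  unfolding frob_dist_def fro_def by simp

lemma final_ineq:
  fixes mt ms \<eta> \<epsilon> :: real
  assumes "mt * (1 - \<eta>) \<le> ms * (1 + \<eta>)" "\<eta> = \<epsilon> / 3" "0 < \<epsilon>" "\<epsilon> < 1" "ms \<ge> 0" "mt \<ge> 0"
  shows "sqrt mt \<le> (1 + \<epsilon>) * sqrt ms"
proof -
  have eps: "\<epsilon> = 3 * \<eta>" using assms by simp
  have e0: "\<eta> \<ge> 0" "\<eta> * 9 \<le> 3" using assms by auto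
  have e1: "\<eta>^3 * 9 \<le> \<eta>^2 * 3"
  proof -
    have "\<eta>^2 * (\<eta> * 9) \<le> \<eta>^2 * 3" using e0 by (intro mult_left_mono) auto
    thus ?thesis by (simp add: power2_eq_square power3_eq_cube mult_ac)
  qed
  have ex: "(1 + \<epsilon>)^2 * (1 - \<eta>) = 1 + 5 * \<eta> + 3 * \<eta>^2 - 9 * \<eta>^3"
    unfolding eps by (simp add: power2_eq_square power3_eq_cube algebra_simps)
  have "1 + \<eta> \<le> (1 + \<epsilon>)^2 * (1 - \<eta>)" unfolding ex using e0 e1
    by (simp add: power2_eq_square)
  hence "ms * (1 + \<eta>) \<le> ms * ((1 + \<epsilon>)^2 * (1 - \<eta>))"
    using assms by (intro mult_left_mono) auto
  hence "mt * (1 - \<eta>) \<le> ((1 + \<epsilon>)^2 * ms) * (1 - \<eta>)" using assms(1) by (simp add: mult_ac)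
  hence "mt \<le> (1 + \<epsilon>)^2 * ms" using assms by (subst (asm) mult_le_cancel_right) auto
  hence "sqrt mt \<le> sqrt ((1 + \<epsilon>)^2 * ms)" by (rule real_sqrt_le_mono)
  also have "\<dots> = (1 + \<epsilon>) * sqrt ms" using assms by (simp add: real_sqrt_mult)
  finally show ?thesis .
qed


lemma med_cong:
  assumes "\<And>g. g < G \<Longrightarrow> f g = f' g"
  shows "med f G = med f' G"
proof -
  have "{h. h < G \<and> G < 2 * card {g. g < G \<and> f g \<le> f h}} = {h. h < G \<and> G < 2 * card {g. g < G \<and> f' g \<le> f' h}}"
  proof (intro Collect_cong conj_cong refl)
    fix h assume "h < G"
    hence "{g. g < G \<and> f g \<le> f h} = {g. g < G \<and> f' g \<le> f' h}" using assms by auto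
    thus "(G < 2 * card {g. g < G \<and> f g \<le> f h}) = (G < 2 * card {g. g < G \<and> f' g \<le> f' h})" by simp
  qed
  moreover have "f ` {h. h < G \<and> G < 2 * card {g. g < G \<and> f' g \<le> f' h}} = f' ` {h. h < G \<and> G < 2 * card {g. g < G \<and> f' g \<le> f' h}}"
    using assms by (intro image_cong) auto
  ultimately show ?thesis unfolding med_def by simp
qed

lemma core_prob:
  fixes n m G :: nat and F :: "rmat set" and \<eta> \<epsilon> \<delta> :: real and A :: rmat
    and P :: "(nat \<Rightarrow> nat \<Rightarrow> (nat \<Rightarrow> real) \<times> (nat \<Rightarrow> real)) pmf"
  assumes F: "finite F" "F \<noteq> {}"
    and mpos: "m > 0" and \<eta>: "\<eta> > 0" "32 \<le> real m * \<eta>^2" and Gpos: "G > 0"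
    and small: "real (card F) * exp (- (real G / 8)) < \<delta>"
    and P_def: "P = Pi_pmf {..<G} (\<lambda>_. (\<lambda>_. 0, \<lambda>_. 0)) (\<lambda>_. Gp n m)"
  defines "bad \<equiv> (\<lambda>B w. \<bar>hs n (\<lambda>i j. A i j - B i j) m w - m * fro n (\<lambda>i j. A i j - B i j)\<bar>
                         > m * \<eta> * fro n (\<lambda>i j. A i j - B i j))"
  shows "measure_pmf.prob P {W. \<forall>B\<in>F. 2 * card {g. g < G \<and> bad B (W g)} < G} > 1 - \<delta>"
proof -
  define GoodW where "GoodW = {W. \<forall>B\<in>F. 2 * card {g. g < G \<and> bad B (W g)} < G}"
  have each: "measure_pmf.prob P {W. G \<le> 2 * card {g. g < G \<and> bad B (W g)}} \<le> exp (- (real G / 8))" for B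
  proof -
    have pb: "measure_pmf.prob (Gp n m) {w. bad B w} \<le> 1/4"
      unfolding bad_def by (rule group_bad[OF mpos \<eta>])
    have "measure_pmf.prob P {W. real G \<le> 2 * real (card {g\<in>{..<G}. bad B (W g)})} \<le> exp (- (real G / 8))"
      unfolding P_def by (rule median_fail[OF Gpos pb])
    moreover have "{W. real G \<le> 2 * real (card {g\<in>{..<G}. bad B (W g)})} = {W. G \<le> 2 * card {g. g < G \<and> bad B (W g)}}"
      by (auto simp: of_nat_mult[symmetric] simp del: of_nat_mult)
    ultimately show ?thesis by simp
  qed
  have "UNIV - GoodW = (\<Union>B\<in>F. {W. G \<le> 2 * card {g. g < G \<and> bad B (W g)}})"
    by (auto simp: GoodW_def not_less)
  hence "measure_pmf.prob P (UNIV - GoodW) \<le> (\<Sum>B\<in>F. measure_pmf.prob P {W. G \<le> 2 * card {g. g < G \<and> bad B (W g)}})"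
    using F by (simp add: measure_pmf.finite_measure_subadditive_finite)
  also have "\<dots> \<le> (\<Sum>B\<in>F. exp (- (real G / 8)))" by (intro sum_mono each)
  also have "\<dots> < \<delta>" using small by simp
  finally have "measure_pmf.prob P (UNIV - GoodW) < \<delta>" .
  moreover have "measure_pmf.prob P (UNIV - GoodW) = 1 - measure_pmf.prob P GoodW"
    using measure_pmf.prob_compl[of GoodW P] by simp
  ultimately show ?thesis unfolding GoodW_def by simp
qed


lemma core:
  fixes n :: nat and F :: "rmat set" and \<epsilon> \<delta> :: real
  assumes F: "finite F" "card F \<ge> 2" and e: "0 < \<epsilon>" "\<epsilon> < 1" and d: "0 < \<delta>" "\<delta> < 1"
  shows "\<exists>(M::(nat \<Rightarrow> real) measure) (Q::(nat \<Rightarrow> real) \<Rightarrow> real list \<Rightarrow> rvec \<times> rvec)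
          (out::(nat \<Rightarrow> real) \<Rightarrow> real list \<Rightarrow> rmat) (q::nat).
        prob_space M \<and>
        real q \<le> 2890 * ln (real (card F) / \<delta>) / \<epsilon>^2 \<and>
        (\<forall>A::rmat.
          measure M {\<omega> \<in> space M.
             out \<omega> (run_queries n (Q \<omega>) A q) \<in> F \<and>
             frob_dist n A (out \<omega> (run_queries n (Q \<omega>) A q))
               \<le> (1 + \<epsilon>) * Min ((\<lambda>B. frob_dist n A B) ` F)} > 1 - \<delta>)"
proof -
  define L where "L = ln (real (card F) / \<delta>)"
  define \<eta> where "\<eta> = \<epsilon> / 3"
  define m where "m = nat \<lceil>288 / \<epsilon>^2\<rceil>"
  define G where "G = nat \<lfloor>8 * L\<rfloor> + 1"
  define q where "q = G * m"
  have Fne: "F \<noteq> {}" using F by auto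
  have "real (card F) / \<delta> \<ge> 2"
  proof -
    have c2: "real (card F) \<ge> 2" using F by simp
    have "real (card F) \<le> real (card F) / \<delta>" using d by (simp add: field_simps mult_left_le_one_le)
    thus ?thesis using c2 by linarith
  qed
  hence "ln 2 \<le> L" unfolding L_def by (subst ln_le_cancel_iff) auto
  hence L: "L \<ge> 2/3" using ln2_ge_two_thirds by linarith
  have "\<epsilon> * \<epsilon> < 1 * 1" using e by (intro mult_strict_mono) auto
  hence e2: "\<epsilon>^2 > 0" "\<epsilon>^2 < 1" using e by (auto simp: power2_eq_square)
  have m1: "real m \<ge> 288 / \<epsilon>^2" unfolding m_def by linarith
  have m2: "real m \<le> 288 / \<epsilon>^2 + 1" unfolding m_def using e2
    by (simp add: of_nat_nat)
  have mpos: "m > 0" using m1 e2 by (intro Nat.gr0I) simp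
  have m_eta: "32 \<le> real m * \<eta>^2"
  proof -
    have "real m * \<eta>^2 \<ge> (288 / \<epsilon>^2) * \<eta>^2" using m1 by (intro mult_right_mono) auto
    also have "(288 / \<epsilon>^2) * \<eta>^2 = 32" using e by (simp add: \<eta>_def power2_eq_square field_simps)
    finally show ?thesis by simp
  qed
  have \<eta>pos: "\<eta> > 0" "\<eta> < 1" using e by (auto simp: \<eta>_def)
  have G1: "real G > 8 * L" "real G \<le> 8 * L + 1" unfolding G_def using L
    by (simp_all add: of_nat_nat) linarith+
  have Gpos: "G > 0" unfolding G_def by simp
  have small: "real (card F) * exp (- (real G / 8)) < \<delta>"
  proof -
    have "exp (- (real G / 8)) < exp (- L)" using G1 by simp
    also have "exp (- L) = \<delta> / real (card F)" unfolding L_def using d F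
      by (simp add: exp_minus ln_div exp_diff Fne)
    finally show ?thesis using F by (simp add: field_simps)
  qed
  have qb: "real q \<le> 2890 * L / \<epsilon>^2"
  proof -
    have "real q = real G * real m" by (simp add: q_def)
    also have "\<dots> \<le> (10 * L) * (289 / \<epsilon>^2)"
    proof (intro mult_mono)
      show "real G \<le> 10 * L" using G1 L by linarith
      have "1 \<le> 1 / \<epsilon>^2" using e2 by simp
      thus "real m \<le> 289 / \<epsilon>^2" using m2 by simp
    qed (use L in auto)
    also have "\<dots> = 2890 * L / \<epsilon>^2" by simp
    finally show ?thesis .
  qed
  define enc :: "(nat \<Rightarrow> nat \<Rightarrow> rvec \<times> rvec) \<Rightarrow> nat \<Rightarrow> real" where
    "enc = (\<lambda>W k. case prod_decode k of (g, r) \<Rightarrow> (case prod_decode r of (s, r2) \<Rightarrow>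
              (case prod_decode r2 of (b, i) \<Rightarrow> if b = 0 then fst (W g s) i else snd (W g s) i)))"
  define dec :: "(nat \<Rightarrow> real) \<Rightarrow> nat \<Rightarrow> nat \<Rightarrow> rvec \<times> rvec" where
    "dec = (\<lambda>\<omega> g s. ((\<lambda>i. \<omega> (prod_encode (g, prod_encode (s, prod_encode (0, i))))),
                       (\<lambda>i. \<omega> (prod_encode (g, prod_encode (s, prod_encode (1, i)))))))"
  have dec_enc: "dec (enc W) = W" for W
    by (auto simp: fun_eq_iff enc_def dec_def)
  define P where "P = Pi_pmf {..<G} (\<lambda>_. (\<lambda>_. 0, \<lambda>_. 0)) (\<lambda>_. Gp n m)"
  define M where "M = measure_pmf (map_pmf enc P)"
  define Qf :: "(nat \<Rightarrow> real) \<Rightarrow> real list \<Rightarrow> rvec \<times> rvec" where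
    "Qf = (\<lambda>\<omega> as. dec \<omega> (length as div m) (length as mod m))"
  define est where "est = (\<lambda>\<omega> (ans::real list) (B::rmat).
     med (\<lambda>g. \<Sum>s<m. (ans ! (g * m + s) - vmv n B (fst (dec \<omega> g s)) (snd (dec \<omega> g s)))^2) G)"
  define out where "out = (\<lambda>\<omega> ans. SOME B. B \<in> F \<and> (\<forall>B'\<in>F. est \<omega> ans B \<le> est \<omega> ans B'))"
  have out_prop: "out \<omega> ans \<in> F \<and> (\<forall>B'\<in>F. est \<omega> ans (out \<omega> ans) \<le> est \<omega> ans B')" for \<omega> ans
  proof -
    have "Min (est \<omega> ans ` F) \<in> est \<omega> ans ` F" using F Fne by (intro Min_in) auto
    then obtain B0 where B0: "B0 \<in> F" "est \<omega> ans B0 = Min (est \<omega> ans ` F)" by auto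
    have "\<forall>B'\<in>F. est \<omega> ans B0 \<le> est \<omega> ans B'" using B0 F by auto
    hence "\<exists>B. B \<in> F \<and> (\<forall>B'\<in>F. est \<omega> ans B \<le> est \<omega> ans B')" using B0 by blast
    thus ?thesis unfolding out_def by (rule someI_ex)
  qed
  have main: "measure M {\<omega> \<in> space M.
             out \<omega> (run_queries n (Qf \<omega>) A q) \<in> F \<and>
             frob_dist n A (out \<omega> (run_queries n (Qf \<omega>) A q))
               \<le> (1 + \<epsilon>) * Min ((\<lambda>B. frob_dist n A B) ` F)} > 1 - \<delta>" for A
  proof -
    define D where "D = (\<lambda>B::rmat. \<lambda>i j. A i j - B i j)"
    define bad where "bad = (\<lambda>B w. \<bar>hs n (\<lambda>i j. A i j - B i j) m w - m * fro n (\<lambda>i j. A i j - B i j)\<bar>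
                         > m * \<eta> * fro n (\<lambda>i j. A i j - B i j))"
    define GoodW where "GoodW = {W. \<forall>B\<in>F. 2 * card {g. g < G \<and> bad B (W g)} < G}"
    define E where "E = {\<omega> \<in> space M.
             out \<omega> (run_queries n (Qf \<omega>) A q) \<in> F \<and>
             frob_dist n A (out \<omega> (run_queries n (Qf \<omega>) A q))
               \<le> (1 + \<epsilon>) * Min ((\<lambda>B. frob_dist n A B) ` F)}"
    have pG: "measure_pmf.prob P GoodW > 1 - \<delta>"
      unfolding GoodW_def bad_def
      by (rule core_prob[OF F(1) Fne mpos \<eta>pos(1) m_eta Gpos small P_def])
    have incl: "GoodW \<subseteq> enc -` E"
    proof
      fix W assume W: "W \<in> GoodW"
      define ans where "ans = run_queries n (Qf (enc W)) A q"
      have ans_eq: "ans = map (\<lambda>t. vmv n A (fst (W (t div m) (t mod m))) (snd (W (t div m) (t mod m)))) [0..<q]"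
        unfolding ans_def by (rule run_queries_nonadaptive) (simp add: Qf_def dec_enc)
      have ans_nth: "ans ! (g * m + s) = vmv n A (fst (W g s)) (snd (W g s))" if "g < G" "s < m" for g s
        using idx_facts[OF that(2,1)] by (simp add: ans_eq q_def)
      have est_eq: "est (enc W) ans B = med (\<lambda>g. hs n (D B) m (W g)) G" for B
        unfolding est_def dec_enc
        by (intro med_cong) (auto simp: hs_def ans_nth vmv_diff D_def intro!: sum.cong)
      have bounds: "m * fro n (D B) - m * \<eta> * fro n (D B) \<le> est (enc W) ans B \<and>
                    est (enc W) ans B \<le> m * fro n (D B) + m * \<eta> * fro n (D B)" if "B \<in> F" for B
      proof -
        have "2 * card {g. g < G \<and> bad B (W g)} < G" using W that by (auto simp: GoodW_def)
        moreover have "{g. g < G \<and> bad B (W g)} = {g. g < G \<and> \<not> (m * fro n (D B) - m * \<eta> * fro n (D B) \<le> hs n (D B) m (W g)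
                \<and> hs n (D B) m (W g) \<le> m * fro n (D B) + m * \<eta> * fro n (D B))}"
          by (auto simp: bad_def D_def abs_if)
        ultimately show ?thesis unfolding est_eq by (intro med_bounds) simp
      qed
      define Bt where "Bt = out (enc W) ans"
      have Bt: "Bt \<in> F" "\<forall>B'\<in>F. est (enc W) ans Bt \<le> est (enc W) ans B'"
        using out_prop unfolding Bt_def by auto
      have "Min ((\<lambda>B. frob_dist n A B) ` F) \<in> (\<lambda>B. frob_dist n A B) ` F" using F Fne by (intro Min_in) auto
      then obtain Bs where Bs: "Bs \<in> F" "Min ((\<lambda>B. frob_dist n A B) ` F) = frob_dist n A Bs" by auto
      have "real m * (fro n (D Bt) * (1 - \<eta>)) \<le> est (enc W) ans Bt"
        using bounds[OF Bt(1)] by (simp add: algebra_simps)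
      also have "\<dots> \<le> est (enc W) ans Bs" using Bt Bs by auto
      also have "\<dots> \<le> real m * (fro n (D Bs) * (1 + \<eta>))"
        using bounds[OF Bs(1)] by (simp add: algebra_simps)
      finally have "fro n (D Bt) * (1 - \<eta>) \<le> fro n (D Bs) * (1 + \<eta>)"
        using mpos by (subst (asm) mult_le_cancel_left_pos) auto
      hence "sqrt (fro n (D Bt)) \<le> (1 + \<epsilon>) * sqrt (fro n (D Bs))"
        by (rule final_ineq) (use e fro_nonneg in \<open>auto simp: \<eta>_def\<close>)
      hence "frob_dist n A Bt \<le> (1 + \<epsilon>) * frob_dist n A Bs"
        by (simp only: frob_fro D_def)
      hence "frob_dist n A Bt \<le> (1 + \<epsilon>) * Min ((\<lambda>B. frob_dist n A B) ` F)"
        unfolding Bs(2) .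
      thus "W \<in> enc -` E" using Bt(1) unfolding E_def Bt_def ans_def M_def by simp
    qed
    have "measure M E = measure_pmf.prob P (enc -` E)"
      unfolding M_def by (simp add: measure_map_pmf)
    also have "\<dots> \<ge> measure_pmf.prob P GoodW"
      using incl by (intro measure_pmf.finite_measure_mono) auto
    finally show ?thesis using pG unfolding E_def by simp
  qed
  have "prob_space M" unfolding M_def by (rule measure_pmf.prob_space_axioms)
  thus ?thesis using qb main unfolding L_def by blast
qed


theorem claimA1:
  shows "\<exists>C::real. C > 0 \<and>
    (\<forall>(n::nat) (F::rmat set) (\<epsilon>::real) (\<delta>::real).
      finite F \<and> F \<noteq> {} \<and> 0 < \<epsilon> \<and> \<epsilon> < 1 \<and> 0 < \<delta> \<and> \<delta> < 1 \<longrightarrow>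
      (\<exists>(M::(nat \<Rightarrow> real) measure) (Q::(nat \<Rightarrow> real) \<Rightarrow> real list \<Rightarrow> rvec \<times> rvec)
          (out::(nat \<Rightarrow> real) \<Rightarrow> real list \<Rightarrow> rmat) (q::nat).
        prob_space M \<and>
        real q \<le> C * ln (real (card F) / \<delta>) / \<epsilon>^2 \<and>
        (\<forall>A::rmat.
          measure M {\<omega> \<in> space M.
             out \<omega> (run_queries n (Q \<omega>) A q) \<in> F \<and>
             frob_dist n A (out \<omega> (run_queries n (Q \<omega>) A q))
               \<le> (1 + \<epsilon>) * Min ((\<lambda>B. frob_dist n A B) ` F)} > 1 - \<delta>)))"
proof (rule exI[of _ 2890], intro conjI allI impI)
  fix n :: nat and F :: "rmat set" and \<epsilon> \<delta> :: real
  assume H: "finite F \<and> F \<noteq> {} \<and> 0 < \<epsilon> \<and> \<epsilon> < 1 \<and> 0 < \<delta> \<and> \<delta> < 1"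
  show "\<exists>(M::(nat \<Rightarrow> real) measure) (Q::(nat \<Rightarrow> real) \<Rightarrow> real list \<Rightarrow> rvec \<times> rvec)
          (out::(nat \<Rightarrow> real) \<Rightarrow> real list \<Rightarrow> rmat) (q::nat).
        prob_space M \<and>
        real q \<le> 2890 * ln (real (card F) / \<delta>) / \<epsilon>^2 \<and>
        (\<forall>A::rmat.
          measure M {\<omega> \<in> space M.
             out \<omega> (run_queries n (Q \<omega>) A q) \<in> F \<and>
             frob_dist n A (out \<omega> (run_queries n (Q \<omega>) A q))
               \<le> (1 + \<epsilon>) * Min ((\<lambda>B. frob_dist n A B) ` F)} > 1 - \<delta>)"
  proof (cases "card F \<ge> 2")
    case True
    thus ?thesis using H core[of F \<epsilon> \<delta> n] by blast
  next
    case False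
    have "card F = 1" using False H by (metis One_nat_def card_0_eq less_2_cases not_less)
    then obtain B0 where F: "F = {B0}" by (rule card_1_singletonE)
    define M :: "(nat \<Rightarrow> real) measure" where "M = measure_pmf (return_pmf (\<lambda>_. 0))"
    have ps: "prob_space M" unfolding M_def by (rule measure_pmf.prob_space_axioms)
    have "1 < 1 / \<delta>" using H by (simp add: field_simps)
    hence "ln (1 / \<delta>) > 0" by (rule ln_gt_zero)
    hence qb: "real 0 \<le> 2890 * ln (real (card F) / \<delta>) / \<epsilon>^2" using F by simp
    have "measure M {\<omega> \<in> space M.
             (\<lambda>_ _. B0) \<omega> (run_queries n ((\<lambda>_ _. ((\<lambda>_. 0), (\<lambda>_. 0))) \<omega>) A 0) \<in> F \<and>
             frob_dist n A ((\<lambda>_ _. B0) \<omega> (run_queries n ((\<lambda>_ _. ((\<lambda>_. 0), (\<lambda>_. 0))) \<omega>) A 0))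
               \<le> (1 + \<epsilon>) * Min ((\<lambda>B. frob_dist n A B) ` F)} > 1 - \<delta>" for A
    proof -
      have "frob_dist n A B0 \<ge> 0" by (simp add: frob_dist_def sum_nonneg)
      hence "frob_dist n A B0 \<le> (1 + \<epsilon>) * frob_dist n A B0" using H by (simp add: algebra_simps)
      hence "{\<omega> \<in> space M.
             (\<lambda>_ _. B0) \<omega> (run_queries n ((\<lambda>_ _. ((\<lambda>_. 0), (\<lambda>_. 0))) \<omega>) A 0) \<in> F \<and>
             frob_dist n A ((\<lambda>_ _. B0) \<omega> (run_queries n ((\<lambda>_ _. ((\<lambda>_. 0), (\<lambda>_. 0))) \<omega>) A 0))
               \<le> (1 + \<epsilon>) * Min ((\<lambda>B. frob_dist n A B) ` F)} = space M"
        using F by auto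
      moreover have "measure M (space M) = 1" using ps by (rule prob_space.prob_space)
      ultimately show ?thesis using H by simp
    qed
    hence "\<forall>A. measure M {\<omega> \<in> space M.
             (\<lambda>_ _. B0) \<omega> (run_queries n ((\<lambda>_ _. ((\<lambda>_. 0), (\<lambda>_. 0))) \<omega>) A 0) \<in> F \<and>
             frob_dist n A ((\<lambda>_ _. B0) \<omega> (run_queries n ((\<lambda>_ _. ((\<lambda>_. 0), (\<lambda>_. 0))) \<omega>) A 0))
               \<le> (1 + \<epsilon>) * Min ((\<lambda>B. frob_dist n A B) ` F)} > 1 - \<delta>" by blast
    with ps qb show ?thesis by (intro exI[of _ M] exI[of _ "\<lambda>_ _. ((\<lambda>_. 0), (\<lambda>_. 0))"] exI[of _ "\<lambda>_ _. B0"] exI[of _ "0::nat"] conjI)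
  qed
qed simp

end
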